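(* Let $R$ be an associative ring with identity and involution $*$, and let $a\in R^{\#}\cap R^{\dagger}$. Then $a\in R^{SEP}$ if and only if $a(a^{\#})^*a^{\dagger}$ is a right $a$-idempotent, i.e. $(a(a^{\#})^*a^{\dagger})^2=a(a^{\#})^*a^{\dagger}a$.
   Context: An involution on $R$ is a map $x\mapsto x^*$ with $(x^* )^*=x$, $(x+y)^*=x^*+y^*$, $(xy)^*=y^*x^*$. An element $a$ is Moore–Penrose invertible if there is $b$ with $aba=a$, $bab=b$, $(ab)^*=ab$, $(ba)^*=ba$; such $b$ is unique, denoted $a^{\dagger}$, and $R^{\dagger}$ is the set of such $a$. An element $a$ is group invertible if there is $b$ with $aba=a$, $bab=b$, $ab=ba$; such $b$ is unique, denoted $a^{\#}$, and $R^{\#}$ is the set of such $a$. For $a\in R^{\#}\cap R^{\dagger}$, $a$ is SEP if $a^*=a^{\dagger}=a^{\#}$; $R^{SEP}$ denotes the set of SEP elements. For $e,c\in R$, $e$ is a right $c$-idempotent if $e^2=ec$. *)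

theory Defs
  imports Main
begin

definition involution :: "('a::ring_1 \<Rightarrow> 'a) \<Rightarrow> bool" where
  "involution s \<longleftrightarrow> (\<forall>x. s (s x) = x) \<and> (\<forall>x y. s (x + y) = s x + s y)
                      \<and> (\<forall>x y. s (x * y) = s y * s x)"

definition is_mp_inverse :: "('a::ring_1 \<Rightarrow> 'a) \<Rightarrow> 'a \<Rightarrow> 'a \<Rightarrow> bool" where
  "is_mp_inverse s a b \<longleftrightarrow> a * b * a = a \<and> b * a * b = b \<and> s (a * b) = a * b \<and> s (b * a) = b * a"

definition mp_invertible :: "('a::ring_1 \<Rightarrow> 'a) \<Rightarrow> 'a \<Rightarrow> bool" where
  "mp_invertible s a \<longleftrightarrow> (\<exists>b. is_mp_inverse s a b)"

definition mp_inv :: "('a::ring_1 \<Rightarrow> 'a) \<Rightarrow> 'a \<Rightarrow> 'a" where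
  "mp_inv s a = (THE b. is_mp_inverse s a b)"

definition is_group_inverse :: "'a::ring_1 \<Rightarrow> 'a \<Rightarrow> bool" where
  "is_group_inverse a b \<longleftrightarrow> a * b * a = a \<and> b * a * b = b \<and> a * b = b * a"

definition group_invertible :: "'a::ring_1 \<Rightarrow> bool" where
  "group_invertible a \<longleftrightarrow> (\<exists>b. is_group_inverse a b)"

definition group_inv :: "'a::ring_1 \<Rightarrow> 'a" where
  "group_inv a = (THE b. is_group_inverse a b)"

definition SEP :: "('a::ring_1 \<Rightarrow> 'a) \<Rightarrow> 'a \<Rightarrow> bool" where
  "SEP s a \<longleftrightarrow> group_invertible a \<and> mp_invertible s a \<and> s a = mp_inv s a \<and> mp_inv s a = group_inv a"

definition right_idempotent :: "'a::ring_1 \<Rightarrow> 'a \<Rightarrow> bool" where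
  "right_idempotent c e \<longleftrightarrow> e * e = e * c"

end

theory Submission
  imports Defs
begin

lemma mp_unique:
  fixes s :: "'a::ring_1 \<Rightarrow> 'a"
  assumes inv: "involution s" and b: "is_mp_inverse s a b" and c: "is_mp_inverse s a c"
  shows "b = c"
proof -
  have ss: "\<And>x. s (s x) = x" and sm: "\<And>x y. s (x * y) = s y * s x"
    using inv unfolding involution_def by auto
  have b1: "a*b*a = a" "b*a*b = b" "s (a*b) = a*b" "s (b*a) = b*a"
    and c1: "a*c*a = a" "c*a*c = c" "s (a*c) = a*c" "s (c*a) = c*a"
    using b c unfolding is_mp_inverse_def by auto
  have "b = b*(a*b)" using b1 by (simp add: mult.assoc)
  also have "\<dots> = b*(s b * s a)" using b1(3) sm by metis
  also have "\<dots> = b*(s b * s (a*c*a))" using c1 by simp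
  also have "\<dots> = b*(s b * (s a * s c * s a))" using sm by (simp add: mult.assoc)
  also have "\<dots> = b*((s b * s a) * (s c * s a))" by (simp add: mult.assoc)
  also have "\<dots> = b*((a*b)*(a*c))" using b1(3) c1(3) sm by metis
  also have "\<dots> = (b*a*b)*a*c" by (simp add: mult.assoc)
  also have "\<dots> = b*a*c" using b1 by simp
  also have "\<dots> = (b*a)*(c*a)*c" using c1 by (simp add: mult.assoc)
  also have "\<dots> = (s a * s b)*(s a * s c)*c" using b1(4) c1(4) sm by metis
  also have "\<dots> = s (a*b*a) * s c * c" using sm by (simp add: mult.assoc)
  also have "\<dots> = (s a * s c) * c" using b1 by (simp add: mult.assoc)
  also have "\<dots> = (c*a)*c" using c1(4) sm by metis
  also have "\<dots> = c" using c1 by simp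
  finally show ?thesis .
qed

lemma grp_unique:
  fixes a :: "'a::ring_1"
  assumes b: "is_group_inverse a b" and c: "is_group_inverse a c"
  shows "b = c"
proof -
  have b1: "a*b*a = a" "b*a*b = b" "a*b = b*a"
    and c1: "a*c*a = a" "c*a*c = c" "a*c = c*a"
    using b c unfolding is_group_inverse_def by auto
  have "b = b*(a*b)" using b1 by (simp add: mult.assoc)
  also have "\<dots> = b*b*a" using b1 by (simp add: mult.assoc)
  also have "\<dots> = b*b*(a*c*a)" using c1 by simp
  also have "\<dots> = (b*(b*a))*(c*a)" by (simp add: mult.assoc)
  also have "\<dots> = (b*a*b)*(a*c)" using b1 c1 by (simp add: mult.assoc)
  also have "\<dots> = b*a*c" using b1 by (simp add: mult.assoc)
  also have "\<dots> = (a*b)*c" using b1 by simp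
  also have "\<dots> = (a*b)*(a*c*c)" using c1 by (metis mult.assoc)
  also have "\<dots> = (a*b*a)*c*c" by (simp add: mult.assoc)
  also have "\<dots> = a*c*c" using b1 by simp
  also have "\<dots> = c" using c1 by (metis mult.assoc)
  finally show ?thesis .
qed

theorem theorem3p5:
  fixes s :: "'a::ring_1 \<Rightarrow> 'a" and a :: 'a
  assumes "involution s"
    and "group_invertible a"
    and "mp_invertible s a"
  shows "SEP s a \<longleftrightarrow>
           right_idempotent a (a * s (group_inv a) * mp_inv s a)"
proof -
  have ss: "\<And>x. s (s x) = x" and sm: "\<And>x y. s (x * y) = s y * s x"
    using assms(1) unfolding involution_def by auto
  define g where "g = group_inv a"
  define m where "m = mp_inv s a"
  have gI: "is_group_inverse a g"
    using assms(2) grp_unique unfolding g_def group_inv_def group_invertible_def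
    by (metis theI)
  have mI: "is_mp_inverse s a m"
    using assms(1,3) mp_unique unfolding m_def mp_inv_def mp_invertible_def
    by (metis theI)
  have g1: "a*g*a = a" "g*a*g = g" "a*g = g*a" using gI unfolding is_group_inverse_def by auto
  have m1: "a*m*a = a" "m*a*m = m" "s (a*m) = a*m" "s (m*a) = m*a"
    using mI unfolding is_mp_inverse_def by auto
  show ?thesis
  proof
    assume "SEP s a"
    hence sa: "s a = m" and mg: "m = g" unfolding SEP_def m_def g_def by auto
    have sg: "s g = a" using sa mg ss by metis
    have aag: "a*a*g = a" using g1 by (metis mult.assoc)
    have "a * s g * m = a" using sg mg aag by simp
    thus "right_idempotent a (a * s (group_inv a) * mp_inv s a)"
      unfolding right_idempotent_def g_def[symmetric] m_def[symmetric] by simp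
  next
    assume "right_idempotent a (a * s (group_inv a) * mp_inv s a)"
    hence H: "a * s g * m * (a * s g * m) = a * s g * m * a"
      unfolding right_idempotent_def g_def m_def .
    have D1: "s a = m*a*s a" "s a = s a * a * m"
    proof -
      have "s a = s (a*m*a)" using m1 by simp
      also have "\<dots> = s a * s m * s a" using sm by (simp add: mult.assoc)
      finally have e: "s a = s a * s m * s a" .
      have "s a * s m = m * a" using m1(4) sm by metis
      moreover have "s m * s a = a * m" using m1(3) sm by metis
      ultimately show "s a = m*a*s a" "s a = s a * a * m" using e by (metis mult.assoc)+
    qed
    have D2: "g = a*g*g" "g = g*g*a" using g1 by (metis mult.assoc)+
    have D2s: "s g = s g * s g * s a" "s g = s a * s g * s g"
      using D2 sm by (metis mult.assoc)+
    have D3: "m*a*s g = s g"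
      by (metis D1(1) D2s(2) mult.assoc)
    have L1: "a * (s g * m * a * s g * m) = a * (s g * m * a)"
      using H by (simp add: mult.assoc)
    have "s g * m * a * s g * m = s g * s g * m" using D3 by (simp add: mult.assoc)
    with L1 have L2: "a * s g * s g * m = a * s g * m * a" by (simp add: mult.assoc)
    have L3: "s g * s g * m = s g * m * a"
    proof -
      have "m * (a * s g * s g * m) = m * (a * s g * m * a)" using L2 by simp
      moreover have "\<And>X. m * (a * s g * X) = s g * X" using D3 by (metis mult.assoc)
      ultimately show ?thesis by (metis mult.assoc)
    qed
    define p where "p = g*a"
    have sp: "s a * s g = s p" unfolding p_def using sm by metis
    have pg: "s p * s g = s g" unfolding p_def using sm g1 by (metis mult.assoc)
    have pma: "s p * m * a = m * a"
    proof -
      have "m*a*p = m*a" unfolding p_def using g1 by (metis mult.assoc)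
      hence "s (m*a*p) = m*a" using m1 by simp
      thus ?thesis using sm m1(4) by (simp add: mult.assoc)
    qed
    have pm: "s p * m = m"
      using pma m1(2) by (metis mult.assoc)
    have E: "s g * m = m * a"
    proof -
      have "s a * (s g * s g * m) = s a * (s g * m * a)" using L3 by simp
      hence "s p * s g * m = s p * m * a" using sp by (metis mult.assoc)
      thus ?thesis using pg pm pma by simp
    qed
    have Es: "s m * g = m * a" using E sm ss m1(4) by metis
    have amam: "s a * m * a = m" using pm sp by (metis E mult.assoc)
    have mag: "m * a * g = m"
    proof -
      have "s a * (s m * g) = s a * (m * a)" using Es by simp
      moreover have "s a * s m = m * a" using sm m1(4) by metis
      ultimately show ?thesis using amam by (metis mult.assoc)
    qed
    have amg: "a*m = a*g" using mag m1(1) by (metis mult.assoc)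
    have gmp: "is_mp_inverse s a g"
      unfolding is_mp_inverse_def using g1 m1(3) amg by metis
    have mg: "m = g" using mp_unique[OF assms(1) mI gmp] .
    have Eg: "s g * g = g * a" using E mg by simp
    have sag: "s (a*g) = a*g" using m1(3) amg by simp
    have "s a * (s g * g) = s a * (g * a)" using Eg by simp
    hence "s (g*a) * g = s a * g * a" using sm by (simp add: mult.assoc)
    hence "g*a*g = s a * (a * g)" using sag g1(3) by (simp add: mult.assoc)
    hence "g = s a * s (a*g)" using g1 sag by simp
    hence sg: "g = s a" using sm ss g1 by (metis mult.assoc)
    show "SEP s a"
      unfolding SEP_def using assms(2,3) mg sg unfolding m_def g_def by simp
  qed
qed

end
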